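(* Let $X$ be a compact metric space and $(f_n)_{n\ge1}$ a sequence of continuous maps $X\to X$ converging uniformly to a function $\phi\colon X\to X$. If $p\in\mathbb{N}^*$ is an idempotent ($p+p=p$), then $\phi^p\circ f_1^{q+p}=f_1^{q+p+p}=f_1^{q+p}$ for all $q\in\mathbb{N}^*$; that is, $f_1^{q+p}(x)$ is a fixed point of $\phi^p$ for every $q\in\mathbb{N}^*$ and every $x\in X$.
   Context: $\mathbb{N}=\{1,2,\dots\}$, $\mathbb{N}^*$ the free ultrafilters on $\mathbb{N}$. For $r\in\mathbb{N}^*$, $r\text{-}\lim_n x_n$ is the unique $y$ with $\{n:x_n\in V\}\in r$ for all neighbourhoods $V$ of $y$. $f_1^n=f_n\circ\cdots\circ f_1$, $f_1^r(x)=r\text{-}\lim_n f_1^n(x)$; $\phi^n$ is the $n$-fold composition and $\phi^r(x)=r\text{-}\lim_n\phi^n(x)$ for $r\in\mathbb{N}^*$. Addition of ultrafilters: $p+q=\{A:\{n:\{m:m+n\in A\}\in p\}\in q\}$. *)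

theory Defs
  imports "HOL-Analysis.Analysis"
begin

text \<open>Free ultrafilters on the positive integers, represented as families of sets of
naturals. Since free ultrafilters contain no finite set, the element 0 is irrelevant.\<close>
definition free_ultrafilter_nat :: "nat set set \<Rightarrow> bool" where
  "free_ultrafilter_nat U \<longleftrightarrow>
     {} \<notin> U \<and>
     (\<forall>A B. A \<in> U \<and> A \<subseteq> B \<longrightarrow> B \<in> U) \<and>
     (\<forall>A B. A \<in> U \<and> B \<in> U \<longrightarrow> A \<inter> B \<in> U) \<and>
     (\<forall>A. A \<in> U \<or> - A \<in> U) \<and>
     (\<forall>A. finite A \<longrightarrow> A \<notin> U)"

definition uf_plus :: "nat set set \<Rightarrow> nat set set \<Rightarrow> nat set set" where
  "uf_plus p q = {A. {n. {m. m + n \<in> A} \<in> p} \<in> q}"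

definition rlim :: "nat set set \<Rightarrow> (nat \<Rightarrow> 'a::topological_space) \<Rightarrow> 'a" where
  "rlim r x = (THE y. \<forall>V. open V \<and> y \<in> V \<longrightarrow> {n. x n \<in> V} \<in> r)"

text \<open>f_1^n = f_n o ... o f_1 (with f_1^0 = id, never used at index 0 in a limit).\<close>
primrec comp_seq :: "(nat \<Rightarrow> 'a \<Rightarrow> 'a) \<Rightarrow> nat \<Rightarrow> 'a \<Rightarrow> 'a" where
  "comp_seq f 0 = id"
| "comp_seq f (Suc n) = f (Suc n) \<circ> comp_seq f n"

definition comp_seq_uf :: "(nat \<Rightarrow> 'a::topological_space \<Rightarrow> 'a) \<Rightarrow> nat set set \<Rightarrow> 'a \<Rightarrow> 'a" where
  "comp_seq_uf f r x = rlim r (\<lambda>n. comp_seq f n x)"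

definition iter_uf :: "('a::topological_space \<Rightarrow> 'a) \<Rightarrow> nat set set \<Rightarrow> 'a \<Rightarrow> 'a" where
  "iter_uf \<phi> r x = rlim r (\<lambda>n. (\<phi> ^^ n) x)"

end

theory Submission
  imports Defs
begin

definition ufF :: "nat set set \<Rightarrow> nat filter" where
  "ufF U = Abs_filter (\<lambda>P. {n. P n} \<in> U)"

lemma fu_UNIV: "free_ultrafilter_nat U \<Longrightarrow> UNIV \<in> U"
  unfolding free_ultrafilter_nat_def by (metis Compl_empty_eq)

lemma eventually_ufF:
  assumes "free_ultrafilter_nat U"
  shows "eventually P (ufF U) \<longleftrightarrow> {n. P n} \<in> U"
  unfolding ufF_def
proof (rule eventually_Abs_filter, rule is_filter.intro)
  show "{n. True} \<in> U" using fu_UNIV[OF assms] by simp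
next
  fix P Q assume "{n. P n} \<in> U" "{n. Q n} \<in> U"
  then show "{n. P n \<and> Q n} \<in> U" using assms unfolding free_ultrafilter_nat_def
    by (metis Collect_conj_eq)
next
  fix P Q assume "\<forall>x. P x \<longrightarrow> Q x" "{n. P n} \<in> U"
  then show "{n. Q n} \<in> U" using assms unfolding free_ultrafilter_nat_def
    by (metis Collect_mono)
qed

lemma ufF_nbot: "free_ultrafilter_nat U \<Longrightarrow> ufF U \<noteq> bot"
  using eventually_ufF[of U "\<lambda>_. False"] unfolding free_ultrafilter_nat_def
  by (metis empty_def eventually_bot)

lemma tendsto_ufF_iff:
  "free_ultrafilter_nat U \<Longrightarrow> (x \<longlongrightarrow> y) (ufF U) \<longleftrightarrow> (\<forall>V. open V \<and> y \<in> V \<longrightarrow> {n. x n \<in> V} \<in> U)"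
  unfolding tendsto_def by (auto simp add: eventually_ufF)

lemma rlim_eq:
  fixes x :: "nat \<Rightarrow> 'a::t2_space"
  assumes "free_ultrafilter_nat U" "(x \<longlongrightarrow> y) (ufF U)"
  shows "rlim U x = y"
  unfolding rlim_def
proof (rule the_equality)
  show "\<forall>V. open V \<and> y \<in> V \<longrightarrow> {n. x n \<in> V} \<in> U" using assms tendsto_ufF_iff by blast
next
  fix z assume "\<forall>V. open V \<and> z \<in> V \<longrightarrow> {n. x n \<in> V} \<in> U"
  then have "(x \<longlongrightarrow> z) (ufF U)" using assms tendsto_ufF_iff by blast
  then show "z = y" using tendsto_unique[OF ufF_nbot[OF assms(1)]] assms(2) by blast
qed

lemma seq_ufF:
  assumes "free_ultrafilter_nat U"
  shows "{n. n \<ge> N} \<in> U"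
proof -
  have "- {n. n \<ge> N} = {..<N}" by auto
  then have "finite (- {n. n \<ge> N})" by simp
  then have "- {n. n \<ge> N} \<notin> U" using assms unfolding free_ultrafilter_nat_def by blast
  then show ?thesis using assms unfolding free_ultrafilter_nat_def by (metis double_complement)
qed

lemma rlim_exists:
  fixes x :: "nat \<Rightarrow> 'a::metric_space"
  assumes U: "free_ultrafilter_nat U" and X: "compact X" and xX: "\<And>n. x n \<in> X"
  shows "\<exists>y\<in>X. (x \<longlongrightarrow> y) (ufF U)"
proof -
  let ?G = "filtermap x (ufF U)"
  have "?G \<noteq> bot" using ufF_nbot[OF U] by (simp add: filtermap_bot_iff)
  moreover have "eventually (\<lambda>z. z \<in> X) ?G" using xX by (simp add: eventually_filtermap)
  ultimately obtain y where y: "y \<in> X" "inf (nhds y) ?G \<noteq> bot"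
    using X unfolding compact_filter by blast
  have "(x \<longlongrightarrow> y) (ufF U)"
    unfolding tendsto_ufF_iff[OF U]
  proof (intro allI impI)
    fix V assume V: "open V \<and> y \<in> V"
    show "{n. x n \<in> V} \<in> U"
    proof (rule ccontr)
      assume "{n. x n \<in> V} \<notin> U"
      then have "- {n. x n \<in> V} \<in> U" using U unfolding free_ultrafilter_nat_def by blast
      then have "{n. x n \<notin> V} \<in> U" by (simp add: Compl_eq)
      then have e1: "eventually (\<lambda>z. z \<notin> V) ?G" by (simp add: eventually_filtermap eventually_ufF[OF U])
      have e2: "eventually (\<lambda>z. z \<in> V) (nhds y)" using V eventually_nhds by blast
      have "eventually (\<lambda>z. False) (inf (nhds y) ?G)"
        unfolding eventually_inf using e1 e2 by blast
      then show False using y(2) by (simp add: eventually_False)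
    qed
  qed
  then show ?thesis using y by blast
qed

lemma rlim_obtain:
  fixes x :: "nat \<Rightarrow> 'a::metric_space"
  assumes U: "free_ultrafilter_nat U" and X: "compact X" and xX: "\<And>n. x n \<in> X"
  obtains y where "y \<in> X" "(x \<longlongrightarrow> y) (ufF U)"
proof -
  have "\<exists>y\<in>X. (x \<longlongrightarrow> y) (ufF U)" by (rule rlim_exists[OF U X]) (rule xX)
  then obtain y where "y \<in> X \<and> (x \<longlongrightarrow> y) (ufF U)" by blast
  then show ?thesis using that by blast
qed

lemma fu_empty: "free_ultrafilter_nat U \<Longrightarrow> {} \<notin> U"
  unfolding free_ultrafilter_nat_def by blast
lemma fu_mono: "free_ultrafilter_nat U \<Longrightarrow> A \<in> U \<Longrightarrow> A \<subseteq> B \<Longrightarrow> B \<in> U"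
  unfolding free_ultrafilter_nat_def by blast
lemma fu_int: "free_ultrafilter_nat U \<Longrightarrow> A \<in> U \<Longrightarrow> B \<in> U \<Longrightarrow> A \<inter> B \<in> U"
  unfolding free_ultrafilter_nat_def by blast
lemma fu_ultra: "free_ultrafilter_nat U \<Longrightarrow> A \<in> U \<or> - A \<in> U"
  unfolding free_ultrafilter_nat_def by blast
lemma fu_fin: "free_ultrafilter_nat U \<Longrightarrow> finite A \<Longrightarrow> A \<notin> U"
  unfolding free_ultrafilter_nat_def by blast

lemma fu_compl:
  assumes "free_ultrafilter_nat U" shows "- A \<in> U \<longleftrightarrow> A \<notin> U"
proof -
  have "A \<in> U \<Longrightarrow> - A \<in> U \<Longrightarrow> False"
    using fu_int[OF assms, of A "-A"] fu_empty[OF assms] by simp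
  then show ?thesis using fu_ultra[OF assms, of A] by blast
qed

lemma free_plus:
  assumes p: "free_ultrafilter_nat p" and q: "free_ultrafilter_nat q"
  shows "free_ultrafilter_nat (uf_plus p q)"
  unfolding free_ultrafilter_nat_def uf_plus_def mem_Collect_eq
proof (intro conjI allI impI)
  have "{n. {m. m + n \<in> {}} \<in> p} = {}" using fu_empty[OF p] by simp
  then show "{n. {m. m + n \<in> {}} \<in> p} \<notin> q" using fu_empty[OF q] by simp
next
  fix A B assume h: "{n. {m. m + n \<in> A} \<in> p} \<in> q \<and> A \<subseteq> B"
  have "{n. {m. m + n \<in> A} \<in> p} \<subseteq> {n. {m. m + n \<in> B} \<in> p}"
  proof
    fix n assume "n \<in> {n. {m. m + n \<in> A} \<in> p}"
    moreover have "{m. m + n \<in> A} \<subseteq> {m. m + n \<in> B}" using h by auto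
    ultimately show "n \<in> {n. {m. m + n \<in> B} \<in> p}" using fu_mono[OF p] by blast
  qed
  then show "{n. {m. m + n \<in> B} \<in> p} \<in> q" using h fu_mono[OF q] by blast
next
  fix A B assume h: "{n. {m. m + n \<in> A} \<in> p} \<in> q \<and> {n. {m. m + n \<in> B} \<in> p} \<in> q"
  have "{n. {m. m + n \<in> A} \<in> p} \<inter> {n. {m. m + n \<in> B} \<in> p} \<subseteq> {n. {m. m + n \<in> A \<inter> B} \<in> p}"
  proof
    fix n assume "n \<in> {n. {m. m + n \<in> A} \<in> p} \<inter> {n. {m. m + n \<in> B} \<in> p}"
    then have "{m. m + n \<in> A} \<inter> {m. m + n \<in> B} \<in> p" using fu_int[OF p] by blast
    moreover have "{m. m + n \<in> A} \<inter> {m. m + n \<in> B} = {m. m + n \<in> A \<inter> B}" by auto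
    ultimately show "n \<in> {n. {m. m + n \<in> A \<inter> B} \<in> p}" by simp
  qed
  then show "{n. {m. m + n \<in> A \<inter> B} \<in> p} \<in> q" using h fu_int[OF q] fu_mono[OF q] by blast
next
  fix A
  have "{n. {m. m + n \<in> - A} \<in> p} = - {n. {m. m + n \<in> A} \<in> p}"
  proof -
    have e: "\<And>n. {m. m + n \<in> - A} = - {m. m + n \<in> A}" by auto
    show ?thesis unfolding e using fu_compl[OF p] by blast
  qed
  then show "{n. {m. m + n \<in> A} \<in> p} \<in> q \<or> {n. {m. m + n \<in> - A} \<in> p} \<in> q"
    using fu_ultra[OF q] by simp
next
  fix A :: "nat set" assume fA: "finite A"
  have "\<And>n. finite {m. m + n \<in> A}"
  proof -
    fix n
    have "{m. m + n \<in> A} \<subseteq> (\<lambda>a. a - n) ` A"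
    proof
      fix m assume "m \<in> {m. m + n \<in> A}"
      then show "m \<in> (\<lambda>a. a - n) ` A" by (intro image_eqI[where x="m+n"]) auto
    qed
    then show "finite {m. m + n \<in> A}" using fA finite_subset by blast
  qed
  then have "\<And>n. {m. m + n \<in> A} \<notin> p" using fu_fin[OF p] by blast
  then have "{n. {m. m + n \<in> A} \<in> p} = {}" by simp
  then show "{n. {m. m + n \<in> A} \<in> p} \<notin> q" using fu_empty[OF q] by simp
qed

lemma sum_lim:
  assumes p: "free_ultrafilter_nat p" and q: "free_ultrafilter_nat q"
    and h1: "\<And>n. ((\<lambda>m. x (m + n)) \<longlongrightarrow> a n) (ufF p)"
    and h2: "(a \<longlongrightarrow> b) (ufF q)"
  shows "(x \<longlongrightarrow> b) (ufF (uf_plus p q))"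
  unfolding tendsto_ufF_iff[OF free_plus[OF p q]]
proof (intro allI impI)
  fix V assume V: "open V \<and> b \<in> V"
  have A2: "\<forall>V. open V \<and> b \<in> V \<longrightarrow> {n. a n \<in> V} \<in> q"
    using iffD1[OF tendsto_ufF_iff[OF q] h2] .
  have "{n. a n \<in> V} \<in> q" using A2 V by blast
  moreover have "{n. a n \<in> V} \<subseteq> {n. {m. m + n \<in> {k. x k \<in> V}} \<in> p}"
  proof
    fix n assume "n \<in> {n. a n \<in> V}"
    have A1: "\<forall>V. open V \<and> a n \<in> V \<longrightarrow> {m. x (m + n) \<in> V} \<in> p"
      using iffD1[OF tendsto_ufF_iff[OF p] h1[of n]] .
    then have "{m. x (m + n) \<in> V} \<in> p" using V \<open>n \<in> {n. a n \<in> V}\<close> by blast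
    then show "n \<in> {n. {m. m + n \<in> {k. x k \<in> V}} \<in> p}" by simp
  qed
  ultimately have "{n. {m. m + n \<in> {k. x k \<in> V}} \<in> p} \<in> q"
    using fu_mono[OF q] by blast
  then show "{n. x n \<in> V} \<in> uf_plus p q" unfolding uf_plus_def by simp
qed

lemma comp_seq_shift: "comp_seq f (m + n) = comp_seq (\<lambda>k. f (k + m)) n \<circ> comp_seq f m"
  by (induct n) (simp_all add: add.commute comp_assoc)

lemma comp_seq_in: "(\<And>k. k \<ge> 1 \<Longrightarrow> g k ` X \<subseteq> X) \<Longrightarrow> z \<in> X \<Longrightarrow> comp_seq g n z \<in> X"
  by (induct n) auto

lemma funpow_in: "\<phi> ` X \<subseteq> X \<Longrightarrow> z \<in> X \<Longrightarrow> (\<phi> ^^ n) z \<in> X"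
  by (induct n) auto

lemma funpow_cont:
  assumes "continuous_on X \<phi>" "\<phi> ` X \<subseteq> X"
  shows "continuous_on X (\<phi> ^^ n)"
proof (induct n)
  case 0 then show ?case by (simp add: continuous_on_id)
next
  case (Suc n)
  have "(\<phi> ^^ n) ` X \<subseteq> X" using funpow_in[OF assms(2)] by blast
  then have "continuous_on ((\<phi> ^^ n) ` X) \<phi>" using assms(1) continuous_on_subset by blast
  then show ?case using continuous_on_compose[OF Suc] by simp
qed

lemma unif_shift:
  fixes X :: "'a::metric_space set" and f :: "nat \<Rightarrow> 'a \<Rightarrow> 'a"
  assumes ul: "uniform_limit X f \<phi> sequentially"
    and fX: "\<And>n. n \<ge> 1 \<Longrightarrow> f n ` X \<subseteq> X"
    and phX: "\<phi> ` X \<subseteq> X" and uc: "uniformly_continuous_on X \<phi>"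
  shows "\<forall>e>0. \<exists>M. \<forall>m\<ge>M. \<forall>z\<in>X. dist (comp_seq (\<lambda>k. f (k + m)) n z) ((\<phi> ^^ n) z) < e"
proof (induct n)
  case 0 then show ?case by simp
next
  case (Suc n)
  show ?case
  proof (intro allI impI)
    fix e :: real assume e: "e > 0"
    obtain d where d: "d > 0" "\<forall>x\<in>X. \<forall>x'\<in>X. dist x' x < d \<longrightarrow> dist (\<phi> x') (\<phi> x) < e/2"
      using uc e unfolding uniformly_continuous_on_def by (meson half_gt_zero)
    obtain M1 where M1: "\<forall>m\<ge>M1. \<forall>z\<in>X. dist (comp_seq (\<lambda>k. f (k + m)) n z) ((\<phi> ^^ n) z) < d"
      using Suc d by blast
    have "eventually (\<lambda>k. \<forall>x\<in>X. dist (f k x) (\<phi> x) < e/2) sequentially"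
      using ul e unfolding uniform_limit_iff by (meson half_gt_zero)
    then obtain N where N: "\<And>k. k \<ge> N \<Longrightarrow> \<forall>x\<in>X. dist (f k x) (\<phi> x) < e/2"
      unfolding eventually_sequentially by blast
    have "\<forall>m\<ge>max M1 N. \<forall>z\<in>X. dist (comp_seq (\<lambda>k. f (k + m)) (Suc n) z) ((\<phi> ^^ Suc n) z) < e"
    proof (intro allI impI ballI)
      fix m z assume m: "m \<ge> max M1 N" and z: "z \<in> X"
      define G where "G = comp_seq (\<lambda>k. f (k + m)) n z"
      have GX: "G \<in> X" unfolding G_def by (rule comp_seq_in[OF _ z]) (use fX in auto)
      have pz: "(\<phi> ^^ n) z \<in> X" using funpow_in[OF phX z] .
      have 1: "dist (f (Suc n + m) G) (\<phi> G) < e/2" using N[of "Suc n + m"] m GX by auto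
      have 2: "dist (\<phi> G) (\<phi> ((\<phi> ^^ n) z)) < e/2"
        using d(2) GX pz M1 m z unfolding G_def by auto
      have "dist (f (Suc n + m) G) (\<phi> ((\<phi> ^^ n) z)) < e"
        using dist_triangle[of "f (Suc n + m) G" "\<phi> ((\<phi> ^^ n) z)" "\<phi> G"] 1 2 by linarith
      then show "dist (comp_seq (\<lambda>k. f (k + m)) (Suc n) z) ((\<phi> ^^ Suc n) z) < e"
        unfolding G_def by simp
    qed
    then show "\<exists>M. \<forall>m\<ge>M. \<forall>z\<in>X. dist (comp_seq (\<lambda>k. f (k + m)) (Suc n) z) ((\<phi> ^^ Suc n) z) < e"
      by blast
  qed
qed

lemma keyK:
  fixes X :: "'a::metric_space set" and f :: "nat \<Rightarrow> 'a \<Rightarrow> 'a"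
  assumes X: "compact X"
    and fX: "\<And>n. n \<ge> 1 \<Longrightarrow> f n ` X \<subseteq> X"
    and phX: "\<phi> ` X \<subseteq> X" and ul: "uniform_limit X f \<phi> sequentially"
    and phc: "continuous_on X \<phi>"
    and p: "free_ultrafilter_nat p" and r: "free_ultrafilter_nat r" and x: "x \<in> X"
  shows "comp_seq_uf f r x \<in> X \<and> comp_seq_uf f (uf_plus r p) x = iter_uf \<phi> p (comp_seq_uf f r x)"
proof -
  have cX: "\<And>m. comp_seq f m x \<in> X" by (rule comp_seq_in[OF _ x]) (use fX in auto)
  obtain y where y: "y \<in> X" "((\<lambda>m. comp_seq f m x) \<longlongrightarrow> y) (ufF r)"
    by (rule rlim_obtain[OF r X]) (rule cX)
  have yeq: "comp_seq_uf f r x = y" unfolding comp_seq_uf_def using rlim_eq[OF r y(2)] .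
  have uc: "uniformly_continuous_on X \<phi>" using compact_uniformly_continuous[OF phc X] .
  have us: "\<And>n. \<forall>e>0. \<exists>M. \<forall>m\<ge>M. \<forall>z\<in>X. dist (comp_seq (\<lambda>k. f (k + m)) n z) ((\<phi> ^^ n) z) < e"
    by (rule unif_shift[OF ul _ phX uc]) (rule fX)
  have lim_n: "((\<lambda>m. comp_seq f (m + n) x) \<longlongrightarrow> (\<phi> ^^ n) y) (ufF r)" for n
  proof -
    have h: "((\<lambda>m. (\<phi> ^^ n) (comp_seq f m x)) \<longlongrightarrow> (\<phi> ^^ n) y) (ufF r)"
      by (rule continuous_on_tendsto_compose[OF funpow_cont[OF phc phX] y(2) y(1)]) (simp add: cX)
    show ?thesis
      unfolding tendsto_iff
    proof (intro allI impI)
      fix e :: real assume e: "e > 0"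
      have ev1: "eventually (\<lambda>m. dist ((\<phi> ^^ n) (comp_seq f m x)) ((\<phi> ^^ n) y) < e/2) (ufF r)"
        using tendsto_iff[THEN iffD1, OF h, rule_format, OF half_gt_zero[OF e]] .
      obtain M where M: "\<forall>m\<ge>M. \<forall>z\<in>X. dist (comp_seq (\<lambda>k. f (k + m)) n z) ((\<phi> ^^ n) z) < e/2"
        using us[of n, rule_format, OF half_gt_zero[OF e]] by blast
      have ev2: "eventually (\<lambda>m. m \<ge> M) (ufF r)" using eventually_ufF[OF r, THEN iffD2, OF seq_ufF[OF r]] .
      show "eventually (\<lambda>m. dist (comp_seq f (m + n) x) ((\<phi> ^^ n) y) < e) (ufF r)"
        using ev1 ev2
      proof eventually_elim
        case (elim m)
        have cs: "comp_seq f (m + n) x = comp_seq (\<lambda>k. f (k + m)) n (comp_seq f m x)"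
          by (simp only: comp_seq_shift comp_apply)
        have "dist (comp_seq f (m + n) x) ((\<phi> ^^ n) (comp_seq f m x)) < e/2"
          unfolding cs using M[rule_format, OF elim(2) cX[of m]] .
        then show ?case using elim(1)
          dist_triangle[of "comp_seq f (m + n) x" "(\<phi> ^^ n) y" "(\<phi> ^^ n) (comp_seq f m x)"] by linarith
      qed
    qed
  qed
  have pyX: "\<And>n. (\<phi> ^^ n) y \<in> X" using funpow_in[OF phX y(1)] .
  obtain z where z: "z \<in> X" "((\<lambda>n. (\<phi> ^^ n) y) \<longlongrightarrow> z) (ufF p)"
    by (rule rlim_obtain[OF p X]) (rule pyX)
  have zeq: "iter_uf \<phi> p y = z" unfolding iter_uf_def using rlim_eq[OF p z(2)] .
  have tl: "((\<lambda>k. comp_seq f k x) \<longlongrightarrow> z) (ufF (uf_plus r p))"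
    by (rule sum_lim[OF r p lim_n z(2)])
  have "comp_seq_uf f (uf_plus r p) x = z"
    unfolding comp_seq_uf_def using rlim_eq[OF free_plus[OF r p] tl] .
  then show ?thesis using yeq zeq y(1) by simp
qed

lemma idem:
  fixes X :: "'a::metric_space set"
  assumes X: "compact X" and phX: "\<phi> ` X \<subseteq> X" and phc: "continuous_on X \<phi>"
    and p: "free_ultrafilter_nat p" and pp: "uf_plus p p = p" and y: "y \<in> X"
  shows "iter_uf \<phi> p y \<in> X \<and> iter_uf \<phi> p (iter_uf \<phi> p y) = iter_uf \<phi> p y"
proof -
  have pyX: "\<And>n. (\<phi> ^^ n) y \<in> X" using funpow_in[OF phX y] .
  obtain z where z: "z \<in> X" "((\<lambda>n. (\<phi> ^^ n) y) \<longlongrightarrow> z) (ufF p)"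
    by (rule rlim_obtain[OF p X]) (rule pyX)
  have pzX: "\<And>n. (\<phi> ^^ n) z \<in> X" using funpow_in[OF phX z(1)] .
  obtain w where w: "w \<in> X" "((\<lambda>n. (\<phi> ^^ n) z) \<longlongrightarrow> w) (ufF p)"
    by (rule rlim_obtain[OF p X]) (rule pzX)
  have lim_n: "((\<lambda>m. (\<phi> ^^ (m + n)) y) \<longlongrightarrow> (\<phi> ^^ n) z) (ufF p)" for n
  proof -
    have e: "(\<lambda>m. (\<phi> ^^ (m + n)) y) = (\<lambda>m. (\<phi> ^^ n) ((\<phi> ^^ m) y))"
      by (simp add: funpow_add add.commute[of _ n])
    show ?thesis unfolding e
      by (rule continuous_on_tendsto_compose[OF funpow_cont[OF phc phX] z(2) z(1)]) (simp add: pyX)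
  qed
  have "((\<lambda>k. (\<phi> ^^ k) y) \<longlongrightarrow> w) (ufF (uf_plus p p))"
    by (rule sum_lim[OF p p lim_n w(2)])
  then have "((\<lambda>k. (\<phi> ^^ k) y) \<longlongrightarrow> w) (ufF p)" using pp by simp
  then have "z = w" using tendsto_unique[OF ufF_nbot[OF p] z(2)] by blast
  moreover have "iter_uf \<phi> p y = z" unfolding iter_uf_def using rlim_eq[OF p z(2)] .
  moreover have "iter_uf \<phi> p z = w" unfolding iter_uf_def using rlim_eq[OF p w(2)] .
  ultimately show ?thesis using z(1) by simp
qed

theorem corollary3p13:
  fixes X :: "'a::metric_space set" and f :: "nat \<Rightarrow> 'a \<Rightarrow> 'a" and \<phi> :: "'a \<Rightarrow> 'a"
    and p :: "nat set set"
  assumes "compact X"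
    and "\<And>n. n \<ge> 1 \<Longrightarrow> continuous_on X (f n)"
    and "\<And>n. n \<ge> 1 \<Longrightarrow> f n ` X \<subseteq> X"
    and "\<phi> ` X \<subseteq> X"
    and "uniform_limit X f \<phi> sequentially"
    and "free_ultrafilter_nat p"
    and "uf_plus p p = p"
  shows "\<forall>q. free_ultrafilter_nat q \<longrightarrow> (\<forall>x\<in>X.
           iter_uf \<phi> p (comp_seq_uf f (uf_plus q p) x) = comp_seq_uf f (uf_plus (uf_plus q p) p) x
         \<and> comp_seq_uf f (uf_plus (uf_plus q p) p) x = comp_seq_uf f (uf_plus q p) x)"
proof (intro allI impI ballI)
  fix q x assume q: "free_ultrafilter_nat q" and x: "x \<in> X"
  have "eventually (\<lambda>n. continuous_on X (f n)) sequentially"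
    using assms(2) unfolding eventually_sequentially by blast
  then have phc: "continuous_on X \<phi>"
    using uniform_limit_theorem[OF _ assms(5)] by simp
  have r: "free_ultrafilter_nat (uf_plus q p)" using free_plus[OF q assms(6)] .
  have K: "comp_seq_uf f r x \<in> X \<and> comp_seq_uf f (uf_plus r p) x = iter_uf \<phi> p (comp_seq_uf f r x)"
    if "free_ultrafilter_nat r" "x \<in> X" for r x
    by (rule keyK[OF assms(1) _ assms(4,5) phc assms(6) that]) (rule assms(3))
  have A: "comp_seq_uf f (uf_plus (uf_plus q p) p) x = iter_uf \<phi> p (comp_seq_uf f (uf_plus q p) x)"
    using K[OF r x] by simp
  have B: "comp_seq_uf f (uf_plus q p) x = iter_uf \<phi> p (comp_seq_uf f q x)"
    and yX: "comp_seq_uf f q x \<in> X" using K[OF q x] by simp_all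
  have C: "iter_uf \<phi> p (iter_uf \<phi> p (comp_seq_uf f q x)) = iter_uf \<phi> p (comp_seq_uf f q x)"
    using idem[OF assms(1,4) phc assms(6,7) yX] by simp
  show "iter_uf \<phi> p (comp_seq_uf f (uf_plus q p) x) = comp_seq_uf f (uf_plus (uf_plus q p) p) x
         \<and> comp_seq_uf f (uf_plus (uf_plus q p) p) x = comp_seq_uf f (uf_plus q p) x"
    using A B C by simp
qed

end
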